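(* Let $N\ge 1$, let $a_1,\dots,a_N>0$, $T_1,\dots,T_N\ge 0$ and $P_{\mathrm{tot}}>0$. For $P_i\ge 0$ let $r_i(P_i)=\log_2(1+a_iP_i)$, $J(\mathbf P)=\sum_{i=1}^N (r_i(P_i)-T_i)^2$, and $\bar P_i=(2^{T_i}-1)/a_i$. Consider the problem (P): minimize $J(\mathbf P)$ subject to $\sum_i P_i\le P_{\mathrm{tot}}$ and $P_i\ge 0$ for all $i$; let $J^*$ denote its optimal value. Let $c=\ln 2$. Say that $\lambda\ge 0$ is a KKT multiplier for the sum-power constraint at a feasible $\mathbf P$ if there exist $\mu_1,\dots,\mu_N\ge 0$ with $2(r_i(P_i)-T_i)\frac{a_i}{(1+a_iP_i)c}+\lambda-\mu_i=0$ and $\mu_iP_i=0$ for all $i$, and $\lambda(\sum_i P_i-P_{\mathrm{tot}})=0$. Then: (A) If $P_{\mathrm{tot}}\ge \sum_{i=1}^N \bar P_i$, then the optimal solution is $P_i^*=\bar P_i$ for all $i$, $J^*=0$, and $\sum_i P_i^*=\sum_i\bar P_i\le P_{\mathrm{tot}}$ (with strict inequality, i.e. the power constraint slack, whenever $P_{\mathrm{tot}}>\sum_i\bar P_i$). (B) If $P_{\mathrm{tot}}<\sum_{i=1}^N\bar P_i$, then every optimal solution $\mathbf P^*$ satisfies $\sum_i P_i^*=P_{\mathrm{tot}}$, $J^*>0$, and every KKT multiplier $\lambda^*$ for the sum-power constraint at $\mathbf P^*$ satisfies $\lambda^*>0$.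
   Context: The problem restricted to the domain $0\le P_i\le \bar P_i$ is a convex program with linear constraints satisfying Slater's condition, so the KKT conditions above characterize optimal solutions. *)

theory Defs
  imports Complex_Main
begin

text \<open>Channels are indexed by i < N (i.e. {0..<N}); power vectors are functions nat => real,
only their values on {..<N} matter.\<close>

definition rate :: "(nat \<Rightarrow> real) \<Rightarrow> (nat \<Rightarrow> real) \<Rightarrow> nat \<Rightarrow> real" where
  "rate a P i = log 2 (1 + a i * P i)"

definition Jcost :: "nat \<Rightarrow> (nat \<Rightarrow> real) \<Rightarrow> (nat \<Rightarrow> real) \<Rightarrow> (nat \<Rightarrow> real) \<Rightarrow> real" where
  "Jcost N a T P = (\<Sum>i<N. (rate a P i - T i)\<^sup>2)"

definition Pbar :: "(nat \<Rightarrow> real) \<Rightarrow> (nat \<Rightarrow> real) \<Rightarrow> nat \<Rightarrow> real" where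
  "Pbar a T i = (2 powr T i - 1) / a i"

definition feasible :: "nat \<Rightarrow> real \<Rightarrow> (nat \<Rightarrow> real) \<Rightarrow> bool" where
  "feasible N Ptot P \<longleftrightarrow> (\<Sum>i<N. P i) \<le> Ptot \<and> (\<forall>i<N. 0 \<le> P i)"

definition optimal :: "nat \<Rightarrow> (nat \<Rightarrow> real) \<Rightarrow> (nat \<Rightarrow> real) \<Rightarrow> real \<Rightarrow> (nat \<Rightarrow> real) \<Rightarrow> bool" where
  "optimal N a T Ptot P \<longleftrightarrow> feasible N Ptot P \<and>
     (\<forall>Q. feasible N Ptot Q \<longrightarrow> Jcost N a T P \<le> Jcost N a T Q)"

definition Jstar :: "nat \<Rightarrow> (nat \<Rightarrow> real) \<Rightarrow> (nat \<Rightarrow> real) \<Rightarrow> real \<Rightarrow> real" where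
  "Jstar N a T Ptot = Inf {Jcost N a T Q | Q. feasible N Ptot Q}"

definition kkt_multiplier ::
  "nat \<Rightarrow> (nat \<Rightarrow> real) \<Rightarrow> (nat \<Rightarrow> real) \<Rightarrow> real \<Rightarrow> (nat \<Rightarrow> real) \<Rightarrow> real \<Rightarrow> bool" where
  "kkt_multiplier N a T Ptot P lam \<longleftrightarrow> feasible N Ptot P \<and> 0 \<le> lam \<and>
     (\<exists>\<mu> :: nat \<Rightarrow> real. \<forall>i<N. 0 \<le> \<mu> i \<and>
        2 * (rate a P i - T i) * (a i / ((1 + a i * P i) * ln 2)) + lam - \<mu> i = 0 \<and>
        \<mu> i * P i = 0) \<and>
     lam * ((\<Sum>i<N. P i) - Ptot) = 0"

end

theory Submission
  imports Defs
begin

lemma rate_lt: assumes "(a::real)>0" "p\<ge>0" shows "log 2 (1+a*p) < t \<longleftrightarrow> p < (2 powr t - 1)/a"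
proof -
  have pos: "1+a*p > 0" using assms by (simp add: add_pos_nonneg)
  have "log 2 (1+a*p) < t \<longleftrightarrow> 1+a*p < 2 powr t" using pos by (subst log_less_iff) auto
  also have "\<dots> \<longleftrightarrow> p < (2 powr t - 1)/a" using assms by (auto simp: pos_less_divide_eq algebra_simps)
  finally show ?thesis .
qed

lemma rate_eq: assumes "(a::real)>0" "p\<ge>0" shows "log 2 (1+a*p) = t \<longleftrightarrow> p = (2 powr t - 1)/a"
proof -
  have pos: "1+a*p > 0" using assms by (simp add: add_pos_nonneg)
  have "log 2 (1+a*p) = t \<longleftrightarrow> 1+a*p = 2 powr t"
    using pos by (metis less_numeral_extra(4) log_powr_cancel powr_log_cancel one_less_numeral_iff semiring_norm(76) zero_less_numeral)
  also have "\<dots> \<longleftrightarrow> p = (2 powr t - 1)/a" using assms by (auto simp: eq_divide_eq algebra_simps)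
  finally show ?thesis .
qed

lemma rate_mono_strict: assumes "(a::real)>0" "p\<ge>0" "p < q" shows "log 2 (1+a*p) < log 2 (1+a*q)"
  using assms by (subst log_less_cancel_iff) (auto simp: add_pos_nonneg)

theorem theorem2:
  fixes N :: nat and a T :: "nat \<Rightarrow> real" and Ptot :: real
  assumes "N \<ge> 1"
    and "\<forall>i<N. 0 < a i"
    and "\<forall>i<N. 0 \<le> T i"
    and "0 < Ptot"
  shows "(Ptot \<ge> (\<Sum>i<N. Pbar a T i) \<longrightarrow>
            optimal N a T Ptot (Pbar a T) \<and>
            (\<forall>P. optimal N a T Ptot P \<longleftrightarrow> (\<forall>i<N. P i = Pbar a T i)) \<and>
            Jstar N a T Ptot = 0 \<and>
            (\<Sum>i<N. Pbar a T i) \<le> Ptot \<and>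
            (Ptot > (\<Sum>i<N. Pbar a T i) \<longrightarrow> (\<Sum>i<N. Pbar a T i) < Ptot))
       \<and> (Ptot < (\<Sum>i<N. Pbar a T i) \<longrightarrow>
            Jstar N a T Ptot > 0 \<and>
            (\<forall>P. optimal N a T Ptot P \<longrightarrow>
                 (\<Sum>i<N. P i) = Ptot \<and>
                 (\<forall>lam. kkt_multiplier N a T Ptot P lam \<longrightarrow> lam > 0)))"
proof -
  note apos = assms(2)
  define Pb where "Pb = Pbar a T"
  have Pb_nn: "0 \<le> Pb i" if "i<N" for i
    using apos assms(3) that by (auto simp: Pb_def Pbar_def ge_one_powr_ge_zero)
  have lt_iff: "rate a P i < T i \<longleftrightarrow> P i < Pb i" if "i<N" "0 \<le> P i" for P i
    using rate_lt[of "a i" "P i" "T i"] apos that by (simp add: rate_def Pb_def Pbar_def)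
  have eq_iff: "rate a P i = T i \<longleftrightarrow> P i = Pb i" if "i<N" "0 \<le> P i" for P i
    using rate_eq[of "a i" "P i" "T i"] apos that by (simp add: rate_def Pb_def Pbar_def)
  have J_nn: "0 \<le> Jcost N a T P" for P unfolding Jcost_def by (simp add: sum_nonneg)
  have J0: "Jcost N a T P = 0 \<longleftrightarrow> (\<forall>i<N. P i = Pb i)" if "\<forall>i<N. 0 \<le> P i" for P
  proof -
    have "Jcost N a T P = 0 \<longleftrightarrow> (\<forall>i<N. (rate a P i - T i)\<^sup>2 = 0)"
      unfolding Jcost_def by (subst sum_nonneg_eq_0_iff) auto
    also have "\<dots> \<longleftrightarrow> (\<forall>i<N. P i = Pb i)" using eq_iff that by auto
    finally show ?thesis .
  qed
  have feas0: "feasible N Ptot (\<lambda>_. 0)" using assms(4) by (simp add: feasible_def)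
  have bdd: "bdd_below {Jcost N a T Q | Q. feasible N Ptot Q}"
    using J_nn by (auto intro!: bdd_belowI[where m=0])
  have A: "optimal N a T Ptot Pb \<and>
            (\<forall>P. optimal N a T Ptot P \<longleftrightarrow> (\<forall>i<N. P i = Pb i)) \<and>
            Jstar N a T Ptot = 0" if h: "Ptot \<ge> (\<Sum>i<N. Pb i)"
  proof -
    have fPb: "feasible N Ptot Pb" using h Pb_nn by (simp add: feasible_def)
    have JPb: "Jcost N a T Pb = 0" using J0 Pb_nn by auto
    have opt: "optimal N a T Ptot Pb" using fPb JPb J_nn by (simp add: optimal_def)
    have "optimal N a T Ptot P \<longleftrightarrow> (\<forall>i<N. P i = Pb i)" for P
    proof
      assume o: "optimal N a T Ptot P"
      then have "Jcost N a T P = 0" using fPb JPb J_nn[of P] unfolding optimal_def by force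
      then show "\<forall>i<N. P i = Pb i" using J0 o by (auto simp: optimal_def feasible_def)
    next
      assume e: "\<forall>i<N. P i = Pb i"
      then have "(\<Sum>i<N. P i) = (\<Sum>i<N. Pb i)" by simp
      then have "feasible N Ptot P" using e fPb by (auto simp: feasible_def)
      moreover have "Jcost N a T P = 0" using J0 e Pb_nn by auto
      ultimately show "optimal N a T Ptot P" using J_nn by (simp add: optimal_def)
    qed
    moreover have "Jstar N a T Ptot = 0"
    proof -
      have "Jstar N a T Ptot \<le> 0" unfolding Jstar_def
        using fPb JPb bdd by (metis (mono_tags, lifting) cInf_lower mem_Collect_eq)
      moreover have "Jstar N a T Ptot \<ge> 0" unfolding Jstar_def
        using feas0 J_nn by (intro cInf_greatest) auto
      ultimately show ?thesis by simp
    qed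
    ultimately show ?thesis using opt by simp
  qed
  have B: "Jstar N a T Ptot > 0 \<and>
            (\<forall>P. optimal N a T Ptot P \<longrightarrow>
                 (\<Sum>i<N. P i) = Ptot \<and>
                 (\<forall>lam. kkt_multiplier N a T Ptot P lam \<longrightarrow> lam > 0))" if h: "Ptot < (\<Sum>i<N. Pb i)"
  proof -
    have exlt: "\<exists>i<N. P i < Pb i" if "(\<Sum>i<N. P i) < (\<Sum>i<N. Pb i)" for P
    proof (rule ccontr)
      assume "\<not> ?thesis"
      then have "(\<Sum>i<N. Pb i) \<le> (\<Sum>i<N. P i)" by (intro sum_mono) auto
      then show False using that by simp
    qed
    define \<delta> where "\<delta> = ((\<Sum>i<N. Pb i) - Ptot) / N"
    have Npos: "real N > 0" using assms(1) by simp
    have delpos: "\<delta> > 0" using h Npos by (simp add: \<delta>_def)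
    have exQ: "\<exists>i<N. Q i + \<delta> \<le> Pb i" if fQ: "feasible N Ptot Q" for Q
    proof (rule ccontr)
      assume "\<not> ?thesis"
      then have "\<forall>i<N. Pb i - \<delta> < Q i" by auto
      then have "(\<Sum>i<N. Pb i - \<delta>) < (\<Sum>i<N. Q i)" using assms(1) by (intro sum_strict_mono) (auto simp: lessThan_empty_iff)
      moreover have "(\<Sum>i<N. Pb i - \<delta>) = Ptot" using Npos
        by (simp add: sum_subtractf \<delta>_def)
      ultimately show False using fQ by (simp add: feasible_def)
    qed
    define d where "d i = (if \<delta> \<le> Pb i then (T i - log 2 (1 + a i * (Pb i - \<delta>)))\<^sup>2 else 1)" for i
    have dpos: "d i > 0" if "i<N" for i
    proof (cases "\<delta> \<le> Pb i")
      case True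
      have "log 2 (1 + a i * (Pb i - \<delta>)) < T i"
        using lt_iff[of i "\<lambda>_. Pb i - \<delta>"] True that delpos by (simp add: rate_def)
      then show ?thesis using True by (simp add: d_def)
    qed (simp add: d_def)
    define m where "m = Min (d ` {..<N})"
    have mpos: "m > 0" unfolding m_def using assms(1) dpos by (subst Min_gr_iff) (auto simp: lessThan_empty_iff)
    have Jge: "Jcost N a T Q \<ge> m" if fQ: "feasible N Ptot Q" for Q
    proof -
      obtain i where i: "i<N" "Q i + \<delta> \<le> Pb i" using exQ fQ by blast
      have Qnn: "Q i \<ge> 0" using fQ i by (simp add: feasible_def)
      then have le: "\<delta> \<le> Pb i" using i by simp
      have "rate a Q i \<le> log 2 (1 + a i * (Pb i - \<delta>))"
        unfolding rate_def using apos i Qnn by (subst log_le_cancel_iff) (auto simp: add_pos_nonneg)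
      moreover have "log 2 (1 + a i * (Pb i - \<delta>)) < T i"
        using lt_iff[of i "\<lambda>_. Pb i - \<delta>"] le i delpos by (simp add: rate_def)
      ultimately have "(T i - log 2 (1 + a i * (Pb i - \<delta>)))\<^sup>2 \<le> (T i - rate a Q i)\<^sup>2"
        by (intro power_mono) auto
      then have "d i \<le> (rate a Q i - T i)\<^sup>2" using le by (simp add: d_def power2_commute)
      moreover have "m \<le> d i" unfolding m_def using i by simp
      moreover have "(rate a Q i - T i)\<^sup>2 \<le> Jcost N a T Q" unfolding Jcost_def
        using i by (intro member_le_sum) auto
      ultimately show ?thesis by linarith
    qed
    have Jpos: "Jstar N a T Ptot > 0"
    proof -
      have "m \<le> Jstar N a T Ptot" unfolding Jstar_def
        using feas0 Jge by (intro cInf_greatest) auto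
      then show ?thesis using mpos by simp
    qed
    have sumeq: "(\<Sum>i<N. P i) = Ptot" if o: "optimal N a T Ptot P" for P
    proof (rule ccontr)
      assume ne: "(\<Sum>i<N. P i) \<noteq> Ptot"
      have fP: "feasible N Ptot P" using o by (simp add: optimal_def)
      then have lt: "(\<Sum>i<N. P i) < Ptot" using ne by (simp add: feasible_def)
      then obtain i where i: "i<N" "P i < Pb i" using exlt[of P] h by force
      have Pnn: "P i \<ge> 0" using fP i by (simp add: feasible_def)
      define \<epsilon> where "\<epsilon> = min (Pb i - P i) (Ptot - (\<Sum>i<N. P i))"
      have epos: "\<epsilon> > 0" using i lt by (simp add: \<epsilon>_def)
      define Q where "Q = P(i := P i + \<epsilon>)"
      have sQ: "(\<Sum>j<N. Q j) = (\<Sum>j<N. P j) + \<epsilon>"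
      proof -
        have "(\<Sum>j<N. Q j) = Q i + (\<Sum>j\<in>{..<N}-{i}. Q j)" using i by (subst sum.remove) auto
        also have "(\<Sum>j\<in>{..<N}-{i}. Q j) = (\<Sum>j\<in>{..<N}-{i}. P j)" by (intro sum.cong) (auto simp: Q_def)
        also have "(\<Sum>j<N. P j) = P i + (\<Sum>j\<in>{..<N}-{i}. P j)" using i by (subst sum.remove) auto
        ultimately show ?thesis by (simp add: Q_def)
      qed
      have e1: "\<epsilon> \<le> Ptot - (\<Sum>i<N. P i)" unfolding \<epsilon>_def by simp
      have fQ: "feasible N Ptot Q" unfolding feasible_def
      proof
        show "(\<Sum>j<N. Q j) \<le> Ptot" using sQ e1 by simp
        show "\<forall>j<N. 0 \<le> Q j" using fP epos unfolding feasible_def Q_def by simp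
      qed
      have Qi: "Q i \<le> Pb i" "Q i \<ge> 0" using epos Pnn unfolding Q_def \<epsilon>_def by simp_all
      have r1: "rate a P i < rate a Q i" unfolding rate_def Q_def using apos i Pnn epos
        by (intro rate_mono_strict) auto
      have r2: "rate a Q i \<le> T i" using lt_iff[of i Q] eq_iff[of i Q] Qi i by fastforce
      have "(T i - rate a Q i)\<^sup>2 < (T i - rate a P i)\<^sup>2" using r1 r2
        by (intro power_strict_mono) auto
      then have trm: "(rate a Q i - T i)\<^sup>2 < (rate a P i - T i)\<^sup>2" by (simp add: power2_commute)
      have "Jcost N a T Q < Jcost N a T P"
      proof -
        have "Jcost N a T Q = (rate a Q i - T i)\<^sup>2 + (\<Sum>j\<in>{..<N}-{i}. (rate a Q j - T j)\<^sup>2)"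
          unfolding Jcost_def using i by (subst sum.remove) auto
        also have "(\<Sum>j\<in>{..<N}-{i}. (rate a Q j - T j)\<^sup>2) = (\<Sum>j\<in>{..<N}-{i}. (rate a P j - T j)\<^sup>2)"
          by (intro sum.cong) (auto simp: Q_def rate_def)
        also have "Jcost N a T P = (rate a P i - T i)\<^sup>2 + (\<Sum>j\<in>{..<N}-{i}. (rate a P j - T j)\<^sup>2)"
          unfolding Jcost_def using i by (subst sum.remove) auto
        ultimately show ?thesis using trm by simp
      qed
      then show False using o fQ by (auto simp: optimal_def)
    qed
    have kkt: "lam > 0" if o: "optimal N a T Ptot P" and k: "kkt_multiplier N a T Ptot P lam" for P lam
    proof (rule ccontr)
      assume "\<not> lam > 0"
      then have l0: "lam = 0" using k by (simp add: kkt_multiplier_def)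
      obtain \<mu> where mu: "\<forall>i<N. 0 \<le> \<mu> i \<and>
        2 * (rate a P i - T i) * (a i / ((1 + a i * P i) * ln 2)) + lam - \<mu> i = 0"
        using k unfolding kkt_multiplier_def by blast
      have fP: "feasible N Ptot P" using o by (simp add: optimal_def)
      obtain i where i: "i<N" "P i < Pb i" using exlt[of P] h sumeq[OF o] by force
      have Pnn: "P i \<ge> 0" using fP i by (simp add: feasible_def)
      have r: "rate a P i - T i < 0" using lt_iff[of i P] i Pnn by simp
      have neg: "2 * (rate a P i - T i) < 0" using r by simp
      have pos: "a i / ((1 + a i * P i) * ln 2) > 0" proof -
        have "a i > 0" using apos i(1) by blast
        then have "a i * P i \<ge> 0" using Pnn by simp
        then have "1 + a i * P i > 0" by linarith
        then show ?thesis using \<open>a i > 0\<close> by (simp add: divide_pos_pos)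
      qed
      have "2 * (rate a P i - T i) * (a i / ((1 + a i * P i) * ln 2)) < 0"
        by (rule mult_neg_pos[OF neg pos])
      moreover have "0 \<le> \<mu> i" "2 * (rate a P i - T i) * (a i / ((1 + a i * P i) * ln 2)) + lam - \<mu> i = 0"
        using mu i(1) by blast+
      ultimately show False using l0 by linarith
    qed
    show ?thesis using Jpos sumeq kkt by blast
  qed
  have sle: "(\<Sum>i<N. Pbar a T i) \<le> Ptot \<longrightarrow> (Ptot > (\<Sum>i<N. Pbar a T i) \<longrightarrow> (\<Sum>i<N. Pbar a T i) < Ptot)"
    by blast
  show ?thesis using A B sle unfolding Pb_def by blast
qed

end
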